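(* Let $\mathcal A$ be a unital $C^*$-algebra, $p,q\in\mathcal A$ projections, $a\in\mathcal A$ invertible up to $(p,q)$, and $b$ a $(p,q)$-inverse of $a$. (a) For every $c\in\mathcal A$ with $\|c\|<\|b\|^{-1}$, the element $a+c$ is invertible up to $(p,q)$, and its $(p,q)$-inverse $b_1$ satisfies $\|b_1\|\le \dfrac{\|b\|}{1-\|b\|\,\|c\|}$. (b) Let $C=2\bigl(1+\sum_{n\ge1}|\alpha_n|2^{-(n-1)}\bigr)$, where $\alpha_n$ are the Taylor coefficients of $t\mapsto(1+t)^{-1/2}$ at $0$. If $p',q'\in\mathcal A$ are projections with $\|p-p'\|,\|q-q'\|<\min\{1/2,\,1/(4C\|a\|\,\|b\|)\}$, then $a$ is invertible up to $(p',q')$, and its $(p',q')$-inverse $b'$ satisfies $\|b'\|\le 2\|b\|$.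
   Context: For $a\in\mathcal A$ and projections $p,q$ in a unital $C^*$-algebra $\mathcal A$, $a$ is invertible up to $(p,q)$ if there is $b\in\mathcal A$ with $b=(1-p)b(1-q)$, $(1-q)a(1-p)b=1-q$ and $b(1-q)a(1-p)=1-p$; such $b$ is called a $(p,q)$-inverse of $a$ (it is unique). The constant $C$ is the one for which, for any projections $P,Q$ with $\|P-Q\|<1/2$, there is a unitary $U\in C^*(I,P,Q)$ with $U^*PU=Q$ and $\|I-U\|\le C\|P-Q\|$. *)

theory Defs
  imports "HOL-Analysis.Analysis"
begin

text \<open>The complex scalar multiplication is given explicitly; real scaling is its restriction.\<close>

class cstar_algebra = real_normed_algebra_1 + banach +
  fixes star :: "'a \<Rightarrow> 'a"
    and cscale :: "complex \<Rightarrow> 'a \<Rightarrow> 'a"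
  assumes cscale_add_left: "cscale (\<alpha> + \<beta>) x = cscale \<alpha> x + cscale \<beta> x"
    and cscale_add_right: "cscale \<alpha> (x + y) = cscale \<alpha> x + cscale \<alpha> y"
    and cscale_cscale: "cscale \<alpha> (cscale \<beta> x) = cscale (\<alpha> * \<beta>) x"
    and cscale_of_real: "cscale (complex_of_real r) x = scaleR r x"
    and norm_cscale: "norm (cscale \<alpha> x) = cmod \<alpha> * norm x"
    and cscale_mult_left: "cscale \<alpha> (x * y) = cscale \<alpha> x * y"
    and cscale_mult_right: "cscale \<alpha> (x * y) = x * cscale \<alpha> y"
    and star_star: "star (star x) = x"
    and star_add: "star (x + y) = star x + star y"
    and star_cscale: "star (cscale \<alpha> x) = cscale (cnj \<alpha>) (star x)"
    and star_mult: "star (x * y) = star y * star x"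
    and cstar_identity: "norm (star x * x) = (norm x)\<^sup>2"

definition is_projection :: "'a::cstar_algebra \<Rightarrow> bool" where
  "is_projection p \<longleftrightarrow> star p = p \<and> p * p = p"

definition is_pq_inverse :: "'a::cstar_algebra \<Rightarrow> 'a \<Rightarrow> 'a \<Rightarrow> 'a \<Rightarrow> bool" where
  "is_pq_inverse a p q b \<longleftrightarrow>
     b = (1 - p) * b * (1 - q) \<and>
     (1 - q) * a * (1 - p) * b = 1 - q \<and>
     b * (1 - q) * a * (1 - p) = 1 - p"

definition invertible_upto :: "'a::cstar_algebra \<Rightarrow> 'a \<Rightarrow> 'a \<Rightarrow> bool" where
  "invertible_upto a p q \<longleftrightarrow> (\<exists>b. is_pq_inverse a p q b)"

text \<open>Taylor coefficients of (1+t) powr (-1/2) at 0 (binomial series coefficients).\<close>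
definition alpha_coeff :: "nat \<Rightarrow> real" where
  "alpha_coeff n = ((-1/2::real) gchoose n)"

definition C_const :: real where
  "C_const = 2 * (1 + (\<Sum>n. \<bar>alpha_coeff (Suc n)\<bar> * (1/2) ^ n))"

end

theory Submission imports Defs begin

lemma alpha_bound: "\<bar>alpha_coeff n\<bar> \<le> 1"
proof (induction n)
  case 0 then show ?case by (simp add: alpha_coeff_def)
next
  case (Suc k)
  have e: "of_nat (Suc k) * ((-1/2::real) gchoose Suc k) = ((-1/2) - of_nat k) * ((-1/2::real) gchoose k)"
    using gbinomial_mult_1[of "-1/2::real" k] by (simp add: algebra_simps)
  have "real (Suc k) * \<bar>alpha_coeff (Suc k)\<bar> = \<bar>(-1/2) - real k\<bar> * \<bar>alpha_coeff k\<bar>"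
    using arg_cong[OF e, of abs] unfolding alpha_coeff_def by (simp only: abs_mult abs_of_nat)
  also have "\<bar>(-1/2) - real k\<bar> = real k + 1/2" by simp
  also have "(real k + 1/2) * \<bar>alpha_coeff k\<bar> \<le> (real k + 1/2) * 1" using Suc by (intro mult_left_mono) auto
  also have "\<dots> \<le> real (Suc k) * 1" by simp
  finally show ?case by (subst (asm) mult_le_cancel_left_pos) auto
qed

lemma C_ge2: "C_const \<ge> 2"
proof -
  have s: "summable (\<lambda>n. \<bar>alpha_coeff (Suc n)\<bar> * (1/2::real) ^ n)"
    by (rule summable_comparison_test'[where g="\<lambda>n. (1/2::real)^n" and N=0])
      (auto intro: mult_right_le_one_le simp: alpha_bound)
  have "0 \<le> (\<Sum>n. \<bar>alpha_coeff (Suc n)\<bar> * (1/2::real) ^ n)"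
    by (rule suminf_nonneg[OF s]) auto
  thus ?thesis unfolding C_const_def by simp
qed

lemma neumann:
  fixes x :: "'a::cstar_algebra"
  assumes "norm x < 1"
  shows "\<exists>z. (1 + x) * z = 1 \<and> z * (1 + x) = 1 \<and> norm z \<le> 1 / (1 - norm x)"
proof -
  define f where "f n = (-x)^n" for n
  have nf: "norm (f n) \<le> norm x ^ n" for n unfolding f_def
    using norm_power_ineq[of "-x" n] by simp
  have sg: "summable (\<lambda>n. norm x ^ n)" using assms by (simp add: summable_geometric)
  have sf: "summable f"
    by (rule summable_comparison_test'[OF sg]) (use nf in auto)
  have snf: "summable (\<lambda>n. norm (f n))"
    by (rule summable_comparison_test'[OF sg]) (use nf in auto)
  define z where "z = suminf f"
  have h1: "(-x) * z = z - 1"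
  proof -
    have "(-x) * z = (\<Sum>n. (-x) * f n)" unfolding z_def by (rule suminf_mult[OF sf, symmetric])
    also have "\<dots> = (\<Sum>n. f (Suc n))" by (simp add: f_def)
    also have "\<dots> = z - 1" unfolding z_def using suminf_split_head[OF sf] by (simp add: f_def)
    finally show ?thesis .
  qed
  have h2: "z * (-x) = z - 1"
  proof -
    have "z * (-x) = (\<Sum>n. f n * (-x))" unfolding z_def by (rule suminf_mult2[OF sf])
    also have "\<dots> = (\<Sum>n. f (Suc n))" by (simp add: f_def power_Suc2 del: power_Suc)
    also have "\<dots> = z - 1" unfolding z_def using suminf_split_head[OF sf] by (simp add: f_def)
    finally show ?thesis .
  qed
  have "norm z \<le> (\<Sum>n. norm (f n))" unfolding z_def by (rule summable_norm[OF snf])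
  also have "\<dots> \<le> (\<Sum>n. norm x ^ n)" by (rule suminf_le[OF nf snf sg])
  also have "\<dots> = 1 / (1 - norm x)" using assms by (simp add: suminf_geometric)
  finally have "norm z \<le> 1 / (1 - norm x)" .
  moreover have "(1 + x) * z = 1" using h1 by (simp add: algebra_simps)
  moreover have "z * (1 + x) = 1" using h2 by (simp add: algebra_simps)
  ultimately show ?thesis by blast
qed

lemma star_zero: "star (0::'a::cstar_algebra) = 0"
  by (metis add_cancel_right_right star_add)
lemma star_minus: "star (- x) = - star (x::'a::cstar_algebra)"
  by (metis add.right_inverse add_eq_0_iff star_add star_zero)
lemma star_diff: "star (x - y) = star x - star (y::'a::cstar_algebra)"
  by (metis diff_conv_add_uminus star_add star_minus)
lemma star_one: "star (1::'a::cstar_algebra) = 1"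
  by (metis mult.right_neutral star_mult star_star)
lemma norm_star_le: "norm (x::'a::cstar_algebra) \<le> norm (star x)"
proof (cases "norm x = 0")
  case True then show ?thesis by simp
next
  case False
  have "(norm x)^2 \<le> norm (star x) * norm x"
    by (metis cstar_identity norm_mult_ineq)
  then show ?thesis using False by (simp add: power2_eq_square)
qed
lemma norm_star: "norm (star x) = norm (x::'a::cstar_algebra)"
  by (metis norm_star_le star_star order.antisym)

lemma proj_compl: "is_projection p \<Longrightarrow> is_projection (1 - p)"
  unfolding is_projection_def by (simp add: star_diff star_one algebra_simps)

lemma proj_norm: "is_projection (p::'a::cstar_algebra) \<Longrightarrow> norm p \<le> 1"
proof -
  assume "is_projection p"
  hence "norm p * norm p = norm p * 1" unfolding is_projection_def power2_eq_square by (metis cstar_identity mult_1_right power2_eq_square)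
  thus "norm p \<le> 1" by (cases "norm p = 0") auto
qed


lemma pq_facts:
  fixes a b p q :: "'a::cstar_algebra"
  assumes "is_projection p" "is_projection q" "is_pq_inverse a p q b"
  shows "(1-p)*(1-p) = 1-p" "(1-q)*(1-q) = 1-q" "(1-p)*b = b" "b*(1-q) = b"
    "(1-q)*a*(1-p)*b = 1-q" "b*(1-q)*a*(1-p) = 1-p" "p * b = 0" "b * q = 0"
proof -
  show pp: "(1-p)*(1-p) = 1-p" "(1-q)*(1-q) = 1-q"
    using proj_compl[OF assms(1)] proj_compl[OF assms(2)] unfolding is_projection_def by auto
  have b: "b = (1-p)*b*(1-q)" using assms(3) unfolding is_pq_inverse_def by auto
  show pb: "(1-p)*b = b"
    by (metis b mult.assoc pp(1))
  show bq: "b*(1-q) = b"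
    by (metis b mult.assoc pp(2))
  show "(1-q)*a*(1-p)*b = 1-q" "b*(1-q)*a*(1-p) = 1-p" using assms(3) unfolding is_pq_inverse_def by auto
  show "p * b = 0" using pb by (simp add: algebra_simps)
  show "b * q = 0" using bq by (simp add: algebra_simps)
qed

lemma pq_combine:
  fixes a bl br p q :: "'a::cstar_algebra"
  assumes "is_projection p" "is_projection q"
    and l1: "bl = (1-p)*bl*(1-q)" and l2: "bl*(1-q)*a*(1-p) = 1-p"
    and r1: "br = (1-p)*br*(1-q)" and r2: "(1-q)*a*(1-p)*br = 1-q"
  shows "is_pq_inverse a p q bl"
proof -
  have pp: "(1-p)*(1-p) = 1-p" "(1-q)*(1-q) = 1-q"
    using proj_compl[OF assms(1)] proj_compl[OF assms(2)] unfolding is_projection_def by auto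
  have "bl*(1-q) = bl" by (metis l1 mult.assoc pp(2))
  have "(1-p)*br = br" by (metis r1 mult.assoc pp(1))
  have "bl = bl*(1-q)" using \<open>bl*(1-q) = bl\<close> by simp
  also have "\<dots> = bl*((1-q)*a*(1-p)*br)" using r2 by simp
  also have "\<dots> = (bl*(1-q)*a*(1-p))*br" by (simp add: mult.assoc)
  also have "\<dots> = br" using l2 \<open>(1-p)*br = br\<close> by simp
  finally have "bl = br" .
  thus ?thesis unfolding is_pq_inverse_def using l1 l2 r2 by simp
qed

lemma pq_unique:
  fixes a b1 b2 p q :: "'a::cstar_algebra"
  assumes "is_projection p" "is_projection q" "is_pq_inverse a p q b1" "is_pq_inverse a p q b2"
  shows "b1 = b2"
proof -
  note f1 = pq_facts[OF assms(1,2,3)] and f2 = pq_facts[OF assms(1,2,4)]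
  have "b1 = b1*((1-q)*a*(1-p)*b2)" using f1(4) f2(5) by simp
  also have "\<dots> = (b1*(1-q)*a*(1-p))*b2" by (simp add: mult.assoc)
  also have "\<dots> = b2" using f1(6) f2(3) by simp
  finally show ?thesis .
qed

lemma part_a:
  fixes a b c p q :: "'a::cstar_algebra"
  assumes "is_projection p" "is_projection q" "is_pq_inverse a p q b" "norm b * norm c < 1"
  shows "\<exists>b1. is_pq_inverse (a + c) p q b1 \<and> norm b1 \<le> norm b / (1 - norm b * norm c)"
proof -
  note f = pq_facts[OF assms(1,2,3)]
  define P where "P = 1 - p"
  define Q where "Q = 1 - q"
  have f': "P*P = P" "Q*Q = Q" "P*b = b" "b*Q = b" "Q*a*P*b = Q" "b*Q*a*P = P" "p*b = 0" "b*q = 0"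
    using f unfolding P_def Q_def by auto
  have nbc: "norm (b*c) < 1" using norm_mult_ineq[of b c] assms(4) by linarith
  have ncb: "norm (c*b) < 1" using norm_mult_ineq[of c b] assms(4) by (simp add: mult.commute)
  obtain z1 where z1: "(1 + b*c)*z1 = 1" "z1*(1+b*c) = 1" "norm z1 \<le> 1/(1 - norm (b*c))"
    using neumann[OF nbc] by blast
  obtain z2 where z2: "(1 + c*b)*z2 = 1" "z2*(1+c*b) = 1" "norm z2 \<le> 1/(1 - norm (c*b))"
    using neumann[OF ncb] by blast
  define bl where "bl = z1*b"
  define br where "br = b*z2"
  have pz1: "p*z1 = p"
  proof -
    have "p*(1+b*c) = p" using f'(7) by (simp add: algebra_simps mult.assoc[symmetric])
    hence "p*(1+b*c)*z1 = p*z1" by simp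
    thus ?thesis using z1(1) by (simp add: mult.assoc)
  qed
  have z2q: "z2*q = q"
  proof -
    have "(1+c*b)*q = q" using f'(8) by (simp add: algebra_simps mult.assoc)
    hence "z2*((1+c*b)*q) = z2*q" by simp
    thus ?thesis using z2(2) by (simp add: mult.assoc[symmetric])
  qed
  have l1: "bl = P*bl*Q"
  proof -
    have "P*bl = bl" unfolding P_def bl_def using pz1 f'(7)
      by (simp add: algebra_simps mult.assoc[symmetric])
    moreover have "bl*Q = bl" unfolding bl_def using f'(4) by (simp add: mult.assoc)
    ultimately show ?thesis by (simp add: mult.assoc)
  qed
  have r1: "br = P*br*Q"
  proof -
    have "br*Q = br" unfolding Q_def br_def using z2q f'(8)
      by (simp add: algebra_simps mult.assoc)
    moreover have "P*br = br" unfolding br_def using f'(3) by (simp add: mult.assoc[symmetric])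
    ultimately show ?thesis by (simp add: mult.assoc)
  qed
  have l2: "bl*Q*(a+c)*P = P"
  proof -
    have "b*Q*(a+c)*P = b*Q*a*P + b*Q*c*P" by (simp add: algebra_simps)
    also have "\<dots> = (1 + b*c)*P" using f'(4,6) by (simp add: algebra_simps)
    finally have "b*Q*(a+c)*P = (1 + b*c)*P" .
    hence "bl*Q*(a+c)*P = z1*((1 + b*c)*P)" unfolding bl_def by (simp add: mult.assoc)
    also have "\<dots> = P" using z1(2) by (simp add: mult.assoc[symmetric])
    finally show ?thesis .
  qed
  have r2: "Q*(a+c)*P*br = Q"
  proof -
    have "Q*(a+c)*P*b = Q*a*P*b + Q*c*(P*b)" by (simp add: algebra_simps)
    also have "\<dots> = Q*(1 + c*b)" using f'(3,5) by (simp add: algebra_simps)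
    finally have "Q*(a+c)*P*b = Q*(1 + c*b)" .
    moreover have "Q*(a+c)*P*br = (Q*(a+c)*P*b)*z2" unfolding br_def by (simp add: mult.assoc)
    ultimately have "Q*(a+c)*P*br = (Q*(1 + c*b))*z2" by simp
    also have "\<dots> = Q" using z2(1) by (simp add: mult.assoc)
    finally show ?thesis .
  qed
  have inv: "is_pq_inverse (a+c) p q bl"
    using pq_combine[OF assms(1,2), of bl "a+c" br] l1 l2 r1 r2 unfolding P_def Q_def by blast
  have "norm bl \<le> norm z1 * norm b" unfolding bl_def by (rule norm_mult_ineq)
  also have "\<dots> \<le> 1/(1 - norm (b*c)) * norm b" using z1(3) by (intro mult_right_mono) auto
  also have "\<dots> \<le> 1/(1 - norm b * norm c) * norm b"
    using norm_mult_ineq[of b c] assms(4) by (intro mult_right_mono divide_left_mono) auto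
  finally show ?thesis using inv by (intro exI[of _ bl]) simp
qed


lemma norm_mult_le_right: "norm (x::'a::real_normed_algebra) \<le> 1 \<Longrightarrow> norm (y * x) \<le> norm y"
  by (metis mult_left_le norm_ge_zero norm_mult_ineq order_trans)
lemma norm_mult_le_left: "norm (x::'a::real_normed_algebra) \<le> 1 \<Longrightarrow> norm (x * y) \<le> norm y"
  by (metis mult_left_le_one_le norm_ge_zero norm_mult_ineq order_trans)

lemma LL:
  fixes a b p q p' q' :: "'a::cstar_algebra"
  assumes pr: "is_projection p" "is_projection q" "is_projection p'" "is_projection q'"
    and inv: "is_pq_inverse a p q b"
    and d1: "norm (p - p') < 1/2"
    and k: "norm a * norm b * (norm (p - p') + norm (q - q')) < 1/4"
  shows "\<exists>bl. bl = (1-p')*bl*(1-q') \<and> bl*(1-q')*a*(1-p') = 1-p' \<and> norm bl \<le> 2 * norm b"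
proof -
  note f = pq_facts[OF pr(1,2) inv]
  define P where "P = 1 - p"
  define Q where "Q = 1 - q"
  define P' where "P' = 1 - p'"
  define Q' where "Q' = 1 - q'"
  have f': "P*P = P" "Q*Q = Q" "P*b = b" "b*Q = b" "Q*a*P*b = Q" "b*Q*a*P = P"
    using f unfolding P_def Q_def by auto
  have pp: "P'*P' = P'" "Q'*Q' = Q'" "star P' = P'" "p*p = p" "star p = p" "p'*p' = p'"
    using proj_compl[OF pr(3)] proj_compl[OF pr(4)] pr unfolding P'_def Q'_def is_projection_def by auto
  have nP: "norm P \<le> 1" "norm P' \<le> 1" "norm Q' \<le> 1"
    using proj_norm[OF proj_compl[OF pr(1)]] proj_norm[OF proj_compl[OF pr(3)]] proj_norm[OF proj_compl[OF pr(4)]]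
    unfolding P_def P'_def Q'_def by auto
  define \<delta> where "\<delta> = norm (p - p')"
  define \<epsilon> where "\<epsilon> = norm (q - q')"
  define x where "x = P'*b*Q'*a*P'"
  define d where "d = x - P'"
  have h1: "x = P'*b*Q*a*P*P' + P'*b*(q-q')*a*P*P' + P'*b*Q'*a*(p*P')"
    unfolding x_def P_def Q_def Q'_def by (simp add: algebra_simps)
  have h2: "P'*b*Q*a*P*P' = P' - P'*p*P'"
  proof -
    have "P'*b*Q*a*P*P' = P'*(b*Q*a*P)*P'" by (simp add: mult.assoc)
    also have "\<dots> = P'*(1-p)*P'" using f'(6) P_def by simp
    also have "\<dots> = P' - P'*p*P'" using pp(1) by (simp add: algebra_simps)
    finally show ?thesis .
  qed
  have dd: "d = - (P'*p*P') + P'*b*(q-q')*a*P*P' + P'*b*Q'*a*(p*P')"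
    unfolding d_def using h1 h2 by simp
  have pP: "p*P' = (p - p')*P'" unfolding P'_def using pp(6) by (simp add: algebra_simps)
  have npP: "norm (p*P') \<le> \<delta>"
    unfolding pP \<delta>_def by (rule norm_mult_le_right[OF nP(2)])
  have n1: "norm (P'*p*P') \<le> \<delta>^2"
  proof -
    have "star (p*P') * (p*P') = P'*(p*p)*P'"
      using pp(3,5) by (simp add: star_mult mult.assoc)
    hence "star (p*P') * (p*P') = P'*p*P'" using pp(4) by simp
    hence "norm (P'*p*P') = (norm (p*P'))^2" by (metis cstar_identity)
    also have "\<dots> \<le> \<delta>^2" using npP by (intro power_mono) auto
    finally show ?thesis .
  qed
  have n2: "norm (P'*b*(q-q')*a*P*P') \<le> norm a * norm b * \<epsilon>"
  proof -
    have "norm (P'*b*(q-q')*a*P*P') \<le> norm (P'*b*(q-q')*a*P)" by (rule norm_mult_le_right[OF nP(2)])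
    also have "\<dots> \<le> norm (P'*b*(q-q')*a)" by (rule norm_mult_le_right[OF nP(1)])
    also have "\<dots> \<le> norm (P'*b*(q-q')) * norm a" by (rule norm_mult_ineq)
    also have "\<dots> \<le> (norm (P'*b) * \<epsilon>) * norm a" unfolding \<epsilon>_def
      by (intro mult_right_mono norm_mult_ineq) auto
    also have "\<dots> \<le> (norm b * \<epsilon>) * norm a" unfolding \<epsilon>_def
      by (intro mult_right_mono norm_mult_le_left[OF nP(2)]) auto
    finally show ?thesis by (simp add: algebra_simps)
  qed
  have n3: "norm (P'*b*Q'*a*(p*P')) \<le> norm a * norm b * \<delta>"
  proof -
    have "norm (P'*b*Q'*a*(p*P')) \<le> norm (P'*b*Q'*a) * norm (p*P')" by (rule norm_mult_ineq)
    also have "\<dots> \<le> norm (P'*b*Q'*a) * \<delta>" using npP by (intro mult_left_mono) auto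
    also have "\<dots> \<le> (norm (P'*b*Q') * norm a) * \<delta>" unfolding \<delta>_def
      by (intro mult_right_mono norm_mult_ineq) auto
    also have "\<dots> \<le> (norm b * norm a) * \<delta>" unfolding \<delta>_def
      by (intro mult_right_mono order_trans[OF norm_mult_le_right[OF nP(3)] norm_mult_le_left[OF nP(2)]]) auto
    finally show ?thesis by (simp add: algebra_simps)
  qed
  have "norm d \<le> \<delta>^2 + norm a * norm b * \<epsilon> + norm a * norm b * \<delta>"
    unfolding dd using n1 n2 n3 norm_triangle_ineq[of "- (P'*p*P') + P'*b*(q-q')*a*P*P'" "P'*b*Q'*a*(p*P')"]
      norm_triangle_ineq[of "- (P'*p*P')" "P'*b*(q-q')*a*P*P'"] norm_minus_cancel[of "P'*p*P'"]
    by linarith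
  moreover have "\<delta>^2 < 1/4"
  proof -
    have "0 \<le> \<delta>" "\<delta> < 1/2" using d1 unfolding \<delta>_def by auto
    hence "\<delta> * \<delta> < (1/2) * (1/2)" by (intro mult_strict_mono') auto
    thus ?thesis by (simp add: power2_eq_square)
  qed
  moreover have "norm a * norm b * \<epsilon> + norm a * norm b * \<delta> < 1/4"
    using k unfolding \<delta>_def \<epsilon>_def by (simp add: algebra_simps)
  ultimately have nd: "norm d < 1/2" by linarith
  obtain z where z: "(1 + d)*z = 1" "z*(1 + d) = 1" "norm z \<le> 1/(1 - norm d)"
    using neumann[of d] nd by auto
  have Px: "P'*x = x" "x*P' = x" unfolding x_def using pp(1)
    by (simp_all add: mult.assoc[symmetric]) (simp_all add: mult.assoc)
  have comm: "(1+d)*P' = P'*(1+d)" unfolding d_def using Px pp(1) by (simp add: algebra_simps)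
  have zP: "z*P' = P'*z"
  proof -
    have "z*P' = z*P'*((1+d)*z)" using z(1) by simp
    also have "\<dots> = z*(P'*(1+d))*z" by (simp add: mult.assoc)
    also have "\<dots> = z*((1+d)*P')*z" using comm by simp
    also have "\<dots> = (z*(1+d))*P'*z" by (simp add: mult.assoc)
    also have "\<dots> = P'*z" using z(2) by simp
    finally show ?thesis .
  qed
  define y where "y = z*P'"
  define bl where "bl = y*b*Q'"
  have Py: "P'*y = y" "y*P' = y" unfolding y_def by (metis mult.assoc zP pp(1))+
  have l1: "bl = P'*bl*Q'"
    unfolding bl_def using Py pp(2) by (simp add: mult.assoc[symmetric]) (simp add: mult.assoc)
  have l2: "bl*Q'*a*P' = P'"
  proof -
    have "bl*Q'*a*P' = (y*P')*(b*Q'*a*P')" unfolding bl_def using pp(2) Py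
      by (simp add: mult.assoc)
    also have "\<dots> = y*x" unfolding x_def by (simp add: mult.assoc)
    also have "\<dots> = z*x" unfolding y_def using Px by (simp add: mult.assoc)
    also have "\<dots> = z*((1+d)*P')" unfolding d_def using Px pp(1) by (simp add: algebra_simps)
    also have "\<dots> = P'" using z(2) by (simp add: mult.assoc[symmetric])
    finally show ?thesis .
  qed
  have "norm bl \<le> norm z * norm b"
  proof -
    have "norm bl \<le> norm (y*b)" unfolding bl_def by (rule norm_mult_le_right[OF nP(3)])
    also have "\<dots> \<le> norm y * norm b" by (rule norm_mult_ineq)
    also have "\<dots> \<le> norm z * norm b" unfolding y_def
      by (intro mult_right_mono norm_mult_le_right[OF nP(2)]) auto
    finally show ?thesis .
  qed
  also have "\<dots> \<le> 2 * norm b"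
  proof (intro mult_right_mono)
    have "1/(1 - norm d) \<le> 2" using nd by (simp add: field_simps)
    thus "norm z \<le> 2" using z(3) by linarith
  qed auto
  finally have "norm bl \<le> 2 * norm b" .
  thus ?thesis using l1 l2 unfolding P'_def Q'_def by blast
qed


lemma star_proj_compl: "is_projection p \<Longrightarrow> star (1 - p) = 1 - p"
  using proj_compl unfolding is_projection_def by blast

lemma pq_star:
  fixes a b p q :: "'a::cstar_algebra"
  assumes "is_projection p" "is_projection q" "is_pq_inverse a p q b"
  shows "is_pq_inverse (star a) q p (star b)"
proof -
  have s: "star (1-p) = 1-p" "star (1-q) = 1-q" using star_proj_compl assms(1,2) by auto
  have e: "b = (1-p)*b*(1-q)" "(1-q)*a*(1-p)*b = 1-q" "b*(1-q)*a*(1-p) = 1-p"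
    using assms(3) unfolding is_pq_inverse_def by auto
  have "star b = (1-q)* star b*(1-p)"
    using arg_cong[OF e(1), of star] s by (simp add: star_mult mult.assoc)
  moreover have "star b*(1-p)* star a*(1-q) = 1-q"
    using arg_cong[OF e(2), of star] s by (simp add: star_mult mult.assoc)
  moreover have "(1-p)* star a*(1-q)* star b = 1-p"
    using arg_cong[OF e(3), of star] s by (simp add: star_mult mult.assoc)
  ultimately show ?thesis unfolding is_pq_inverse_def by blast
qed

theorem mainTheorem8:
  fixes a b p q :: "'a::cstar_algebra"
  assumes "is_projection p" and "is_projection q"
    and "invertible_upto a p q" and "is_pq_inverse a p q b"
  shows "(\<forall>c. norm b * norm c < 1 \<longrightarrow>
            invertible_upto (a + c) p q \<and>
            (\<forall>b1. is_pq_inverse (a + c) p q b1 \<longrightarrow>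
                  norm b1 \<le> norm b / (1 - norm b * norm c)))
       \<and> (\<forall>p' q'. is_projection p' \<and> is_projection q' \<and>
            norm (p - p') < 1/2 \<and> norm (q - q') < 1/2 \<and>
            4 * C_const * norm a * norm b * norm (p - p') < 1 \<and>
            4 * C_const * norm a * norm b * norm (q - q') < 1 \<longrightarrow>
            invertible_upto a p' q' \<and>
            (\<forall>b'. is_pq_inverse a p' q' b' \<longrightarrow> norm b' \<le> 2 * norm b))"
proof (intro conjI allI impI)
  fix c :: 'a
  assume c: "norm b * norm c < 1"
  obtain b1 where b1: "is_pq_inverse (a + c) p q b1" "norm b1 \<le> norm b / (1 - norm b * norm c)"
    using part_a[OF assms(1,2,4) c] by blast
  show "invertible_upto (a + c) p q" using b1 unfolding invertible_upto_def by blast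
  fix b2 assume "is_pq_inverse (a + c) p q b2"
  hence "b2 = b1" using pq_unique[OF assms(1,2)] b1(1) by blast
  thus "norm b2 \<le> norm b / (1 - norm b * norm c)" using b1 by simp
next
  fix p' q' :: 'a
  assume h: "is_projection p' \<and> is_projection q' \<and>
            norm (p - p') < 1/2 \<and> norm (q - q') < 1/2 \<and>
            4 * C_const * norm a * norm b * norm (p - p') < 1 \<and>
            4 * C_const * norm a * norm b * norm (q - q') < 1"
  have C2: "C_const \<ge> 2" by (rule C_ge2)
  have k1: "norm a * norm b * norm (p - p') < 1/8"
  proof -
    have "0 \<le> norm a * norm b * norm (p - p')" by simp
    hence "8 * (norm a * norm b * norm (p - p')) \<le> (4 * C_const) * (norm a * norm b * norm (p - p'))"
      using C2 by (intro mult_right_mono) auto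
    thus ?thesis using h by (simp add: mult.assoc)
  qed
  have k2: "norm a * norm b * norm (q - q') < 1/8"
  proof -
    have "0 \<le> norm a * norm b * norm (q - q')" by simp
    hence "8 * (norm a * norm b * norm (q - q')) \<le> (4 * C_const) * (norm a * norm b * norm (q - q'))"
      using C2 by (intro mult_right_mono) auto
    thus ?thesis using h by (simp add: mult.assoc)
  qed
  have k: "norm a * norm b * (norm (p - p') + norm (q - q')) < 1/4"
    using k1 k2 by (simp add: algebra_simps)
  have k': "norm (star a) * norm (star b) * (norm (q - q') + norm (p - p')) < 1/4"
    using k by (simp add: norm_star algebra_simps)
  obtain bl where bl: "bl = (1-p')*bl*(1-q')" "bl*(1-q')*a*(1-p') = 1-p'" "norm bl \<le> 2 * norm b"
    using LL[OF assms(1,2) _ _ assms(4), of p' q'] h k by blast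
  obtain bl2 where bl2: "bl2 = (1-q')*bl2*(1-p')" "bl2*(1-p')* star a*(1-q') = 1-q'"
    using LL[OF assms(2,1) _ _ pq_star[OF assms(1,2,4)], of q' p'] h k' by blast
  have s: "star (1-p') = 1-p'" "star (1-q') = 1-q'" using star_proj_compl h by auto
  have r1: "star bl2 = (1-p')* star bl2*(1-q')"
    using arg_cong[OF bl2(1), of star] s by (simp add: star_mult mult.assoc)
  have r2: "(1-q')*a*(1-p')* star bl2 = 1-q'"
    using arg_cong[OF bl2(2), of star] s by (simp add: star_mult star_star mult.assoc)
  have inv: "is_pq_inverse a p' q' bl"
    using pq_combine[of p' q' bl a "star bl2"] h bl(1,2) r1 r2 by blast
  show "invertible_upto a p' q'" using inv unfolding invertible_upto_def by blast
  fix b' assume "is_pq_inverse a p' q' b'"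
  hence "b' = bl" using pq_unique[of p' q' a] inv h by blast
  thus "norm b' \<le> 2 * norm b" using bl(3) by simp
qed

end
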